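(* Let $\theta\colon\mathbb F(A)\curvearrowright\Omega$ be a convex subshift over a finite alphabet $A$ and $n\ge1$. Then the $n$-ball convex subshift $\theta^{[n]}$ is conjugate to the $n$-fold iterated $1$-ball convex subshift $\theta^{[1][1]\cdots[1]}$ (the $1$-ball construction applied $n$ times).
   Context: Convex subshifts. Let $A$ be a finite alphabet, $\mathbb F=\mathbb F(A)$. $\mathcal C=\mathcal C(A)$ is the set of subsets $\xi\subseteq\mathbb F$ with $1\in\xi$ that are right-convex: whenever a reduced word $a_m^{\varepsilon_m}\cdots a_1^{\varepsilon_1}$ ($a_i\in A$, $\varepsilon_i=\pm1$) lies in $\xi$, so does $a_k^{\varepsilon_k}\cdots a_1^{\varepsilon_1}$ for all $k<m$; topology from $\{0,1\}^{\mathbb F}$. Full convex shift: partial action of $\mathbb F$ on $\mathcal C$ with domains $\mathcal C_\alpha=\{\xi:\alpha^{-1}\in\xi\}$, $\alpha.\xi=\xi\alpha^{-1}$ for $\alpha\in\xi$. A convex subshift is the restriction to a closed invariant $\Omega\subseteq\mathcal C$. For $\xi\in\mathcal C$, $\xi^n=\{\alpha\in\xi:|\alpha|\le n\}$. $n$-ball subshift: $A^{[n:\Omega]}$ is the finite set of formal symbols $[(a.\xi)^n\xleftarrow{a}\xi^n]$ with $\xi\in\Omega$, $a\in A$, $a\in\xi$ (determined by the triple $(B,a,B')$), with $[B'\xleftarrow{a^{-1}}B]:=[B\xleftarrow{a}B']^{-1}$ in $\mathbb F^{[n:\Omega]}=\mathbb F(A^{[n:\Omega]})$. For $\xi\in\Omega$,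 $\alpha=s_m\cdots s_1\in\xi$ reduced, $B_k=((s_k\cdots s_1).\xi)^n$, $\phi_n(\xi,\alpha)=[B_m\xleftarrow{s_m}B_{m-1}]\cdots[B_1\xleftarrow{s_1}B_0]$, $\phi_n(\xi,1)=1$, $\phi_n(\xi)=\{\phi_n(\xi,\alpha):\alpha\in\xi\}$. $\theta^{[n]}$ is the restriction of the full convex shift on $A^{[n:\Omega]}$ to $\Omega^{[n]}:=\phi_n(\Omega)$; it is itself a convex subshift, so the construction can be iterated. A conjugacy between partial actions $\theta\colon G\curvearrowright\Omega$, $\theta'\colon H\curvearrowright\Omega'$ is a pair $(\varphi,\Psi)$ with $\Psi\colon G\to H$ a group isomorphism and $\varphi\colon\Omega\to\Omega'$ a homeomorphism such that $\varphi(\Omega_g)=\Omega'_{\Psi(g)}$ and $\varphi(g.x)=\Psi(g).\varphi(x)$ for all $g$ and $x\in\Omega_{g^{-1}}$ (here $\Omega_g$ is the domain of $\theta_{g^{-1}}$). *)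

theory Defs
  imports "HOL-Analysis.Analysis" "HOL-Library.FSet"
begin

(* Letters: a universal symbol type containing the base letters and the
   n-ball symbols [B <-a- B'] (triples (B,a,B') with B,B' finite sets of words),
   so that the ball construction can be iterated inside one type. *)
datatype 'a sym = Base 'a
  | Tri "('a sym \<times> bool) list fset" "'a sym" "('a sym \<times> bool) list fset"

(* A word a_m^{e_m} ... a_1^{e_1} is the list [(a_m,e_m),...,(a_1,e_1)]
   in written order; e = True means exponent +1, False means -1. *)
type_synonym 's word = "('s \<times> bool) list"

definition reduced :: "'s word \<Rightarrow> bool" where
  "reduced w \<longleftrightarrow> (\<forall>i. Suc i < length w \<longrightarrow>
      \<not> (fst (w!i) = fst (w!Suc i) \<and> snd (w!i) \<noteq> snd (w!Suc i)))"

definition FG :: "'s set \<Rightarrow> 's word set" where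
  "FG A = {w. reduced w \<and> set (map fst w) \<subseteq> A}"

fun canc :: "'s word \<Rightarrow> 's word \<Rightarrow> 's word" where
  "canc [] ys = ys"
| "canc (x#xs) [] = rev (x#xs)"
| "canc (x#xs) (y#ys) =
     (if fst x = fst y \<and> snd x \<noteq> snd y then canc xs ys else rev (x#xs) @ y # ys)"

definition mulw :: "'s word \<Rightarrow> 's word \<Rightarrow> 's word" where
  "mulw u v = canc (rev u) v"

definition invw :: "'s word \<Rightarrow> 's word" where
  "invw u = rev (map (\<lambda>(a,e). (a, \<not> e)) u)"

definition convex :: "'s set \<Rightarrow> 's word set \<Rightarrow> bool" where
  "convex A \<xi> \<longleftrightarrow> \<xi> \<subseteq> FG A \<and> [] \<in> \<xi> \<and> (\<forall>w\<in>\<xi>. \<forall>k. drop k w \<in> \<xi>)"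

definition CC :: "'s set \<Rightarrow> 's word set set" where
  "CC A = {\<xi>. convex A \<xi>}"

(* topology from {0,1}^F: pullback of the product topology along indicator maps *)
definition cfg_top :: "'s word set topology" where
  "cfg_top = pullback_topology UNIV (\<lambda>\<xi> w. w \<in> \<xi>)
              (product_topology (\<lambda>_. (euclidean :: bool topology)) UNIV)"

(* full convex shift: alpha.xi = xi alpha^{-1}, defined for alpha in xi *)
definition act :: "'s word \<Rightarrow> 's word set \<Rightarrow> 's word set" where
  "act \<alpha> \<xi> = (\<lambda>\<gamma>. mulw \<gamma> (invw \<alpha>)) ` \<xi>"

definition convex_subshift :: "'s set \<Rightarrow> 's word set set \<Rightarrow> bool" where
  "convex_subshift A \<Omega> \<longleftrightarrow> \<Omega> \<subseteq> CC A
     \<and> closedin (subtopology cfg_top (CC A)) \<Omega>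
     \<and> (\<forall>\<xi>\<in>\<Omega>. \<forall>\<alpha>\<in>\<xi>. act \<alpha> \<xi> \<in> \<Omega>)"

(* conjugacy of the restricted convex shifts (A,Omega) and (A',Omega');
   Omega_g = {xi. g^{-1} in xi}, and g.x defined for x in Omega_{g^{-1}} = {xi. g in xi} *)
definition conjugate :: "'s set \<Rightarrow> 's word set set \<Rightarrow> 't set \<Rightarrow> 't word set set \<Rightarrow> bool" where
  "conjugate A \<Omega> A' \<Omega>' \<longleftrightarrow> (\<exists>\<phi> \<Psi>.
      bij_betw \<Psi> (FG A) (FG A')
    \<and> (\<forall>x\<in>FG A. \<forall>y\<in>FG A. \<Psi> (mulw x y) = mulw (\<Psi> x) (\<Psi> y))
    \<and> homeomorphic_map (subtopology cfg_top \<Omega>) (subtopology cfg_top \<Omega>') \<phi>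
    \<and> (\<forall>g\<in>FG A. \<phi> ` {\<xi>\<in>\<Omega>. invw g \<in> \<xi>} = {\<eta>\<in>\<Omega>'. invw (\<Psi> g) \<in> \<eta>})
    \<and> (\<forall>g\<in>FG A. \<forall>\<xi>\<in>\<Omega>. g \<in> \<xi> \<longrightarrow> \<phi> (act g \<xi>) = act (\<Psi> g) (\<phi> \<xi>)))"

definition ball :: "nat \<Rightarrow> 's word set \<Rightarrow> 's word fset" where
  "ball n \<xi> = Abs_fset {\<alpha>\<in>\<xi>. length \<alpha> \<le> n}"

definition ball_alph :: "nat \<Rightarrow> 'a sym set \<Rightarrow> 'a sym word set set \<Rightarrow> 'a sym set" where
  "ball_alph n A \<Omega> = {Tri (ball n (act [(a,True)] \<xi>)) a (ball n \<xi>) | \<xi> a.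
       \<xi> \<in> \<Omega> \<and> a \<in> A \<and> [(a,True)] \<in> \<xi>}"

fun ball_letter :: "'a sym \<times> bool \<Rightarrow> 'a sym word fset \<Rightarrow> 'a sym word fset \<Rightarrow> 'a sym \<times> bool" where
  "ball_letter (a, True) Bk Bk1 = (Tri Bk a Bk1, True)"
| "ball_letter (a, False) Bk Bk1 = (Tri Bk1 a Bk, False)"

(* phi_n(xi, alpha); alpha!i = s_k with k = m - i and drop i alpha = s_k ... s_1 *)
definition phiw :: "nat \<Rightarrow> 'a sym word set \<Rightarrow> 'a sym word \<Rightarrow> 'a sym word" where
  "phiw n \<xi> \<alpha> = map (\<lambda>i. ball_letter (\<alpha>!i) (ball n (act (drop i \<alpha>) \<xi>))
                                          (ball n (act (drop (Suc i) \<alpha>) \<xi>)))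
                     [0..<length \<alpha>]"

definition phi :: "nat \<Rightarrow> 'a sym word set \<Rightarrow> 'a sym word set" where
  "phi n \<xi> = phiw n \<xi> ` \<xi>"

definition ball_shift :: "nat \<Rightarrow> 'a sym word set set \<Rightarrow> 'a sym word set set" where
  "ball_shift n \<Omega> = phi n ` \<Omega>"

definition ball1_step :: "'a sym set \<times> 'a sym word set set \<Rightarrow> 'a sym set \<times> 'a sym word set set" where
  "ball1_step p = (ball_alph 1 (fst p) (snd p), ball_shift 1 (snd p))"

end

theory Submission
  imports Defs
begin


definition cancels :: "'s \<times> bool \<Rightarrow> 's \<times> bool \<Rightarrow> bool" where
  "cancels x y \<longleftrightarrow> fst x = fst y \<and> snd x \<noteq> snd y"

lemma cancels_sym: "cancels x y = cancels y x"
  by (auto simp: cancels_def)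

lemma reduced_Nil[simp]: "reduced []" and reduced_single[simp]: "reduced [x]"
  by (auto simp: reduced_def)

lemma reduced_Cons2[simp]: "reduced (x#y#w) \<longleftrightarrow> \<not> cancels x y \<and> reduced (y#w)"
proof
  assume r: "reduced (x#y#w)"
  have "\<not> cancels x y" using r[unfolded reduced_def, rule_format, of 0] by (auto simp: cancels_def)
  moreover have "reduced (y#w)" unfolding reduced_def
  proof (intro allI impI)
    fix i assume "Suc i < length (y#w)"
    then show "\<not> (fst ((y#w)!i) = fst ((y#w)!Suc i) \<and> snd ((y#w)!i) \<noteq> snd ((y#w)!Suc i))"
      using r[unfolded reduced_def, rule_format, of "Suc i"] by auto
  qed
  ultimately show "\<not> cancels x y \<and> reduced (y#w)" by simp
next
  assume h: "\<not> cancels x y \<and> reduced (y#w)"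
  show "reduced (x#y#w)" unfolding reduced_def
  proof (intro allI impI)
    fix i assume i: "Suc i < length (x#y#w)"
    show "\<not> (fst ((x#y#w)!i) = fst ((x#y#w)!Suc i) \<and> snd ((x#y#w)!i) \<noteq> snd ((x#y#w)!Suc i))"
    proof (cases i)
      case 0 then show ?thesis using h by (auto simp: cancels_def)
    next
      case (Suc j) then show ?thesis using h[THEN conjunct2, unfolded reduced_def, rule_format, of j] i by auto
    qed
  qed
qed

lemma reduced_Cons: "reduced (x#w) \<longleftrightarrow> reduced w \<and> (w \<noteq> [] \<longrightarrow> \<not> cancels x (hd w))"
  by (cases w) auto

lemma reduced_append: "reduced (u @ v) \<longleftrightarrow> reduced u \<and> reduced v \<and> (u \<noteq> [] \<and> v \<noteq> [] \<longrightarrow> \<not> cancels (last u) (hd v))"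
  by (induction u) (auto simp: reduced_Cons)

lemma reduced_tl: "reduced w \<Longrightarrow> reduced (tl w)"
  by (cases w) (auto simp: reduced_Cons)

lemma reduced_drop: "reduced w \<Longrightarrow> reduced (drop k w)"
  by (metis append_take_drop_id reduced_append)

lemma reduced_take: "reduced w \<Longrightarrow> reduced (take k w)"
  by (metis append_take_drop_id reduced_append)

lemma reduced_rev: "reduced (rev w) \<longleftrightarrow> reduced w"
  by (induction w) (auto simp: reduced_append reduced_Cons cancels_sym hd_rev last_rev)

definition flipl :: "'s \<times> bool \<Rightarrow> 's \<times> bool" where "flipl x = (fst x, \<not> snd x)"

lemma invw_alt: "invw u = rev (map flipl u)"
  by (simp add: invw_def flipl_def case_prod_beta')

lemma reduced_map_flip: "reduced (map flipl w) \<longleftrightarrow> reduced w"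
  by (induction w) (auto simp: reduced_Cons flipl_def cancels_def hd_map)

lemma reduced_invw[simp]: "reduced (invw w) \<longleftrightarrow> reduced w"
  by (simp add: invw_alt reduced_rev reduced_map_flip)

lemma invw_append: "invw (u @ v) = invw v @ invw u"
  by (simp add: invw_alt)

lemma invw_invw[simp]: "invw (invw u) = u"
  by (simp add: invw_alt rev_map comp_def flipl_def)

lemma length_invw[simp]: "length (invw u) = length u"
  by (simp add: invw_alt)

definition cr :: "'s \<times> bool \<Rightarrow> 's word \<Rightarrow> 's word" where
  "cr s w = (case w of [] \<Rightarrow> [s] | t # w' \<Rightarrow> if cancels s t then w' else s # w)"

lemma cr_Nil[simp]: "cr s [] = [s]" by (simp add: cr_def)
lemma cr_Cons[simp]: "cr s (t#w) = (if cancels s t then w else s # t # w)"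
  by (simp add: cr_def)

lemma reduced_cr: "reduced w \<Longrightarrow> reduced (cr s w)"
  by (cases w) (auto simp: reduced_Cons)

lemma reduced_foldr_cr: "reduced w \<Longrightarrow> reduced (foldr cr u w)"
  by (induction u) (auto simp: reduced_cr)

lemma cr_cr_cancel: assumes r: "reduced v" and c: "cancels s t" shows "cr s (cr t v) = v"
proof (cases v)
  case (Cons t' v')
  show ?thesis
  proof (cases "cancels t t'")
    case True
    then have st: "s = t'" using c by (cases s, cases t, cases t') (auto simp: cancels_def)
    show ?thesis using r True st Cons by (cases v') (auto simp: reduced_Cons)
  next
    case False then show ?thesis using Cons c by simp
  qed
qed (use c in auto)

lemma foldr_cr_cr: "reduced w \<Longrightarrow> reduced z \<Longrightarrow> foldr cr (cr s w) z = cr s (foldr cr w z)"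
proof (cases w)
  case (Cons t w')
  assume rw: "reduced w" and rz: "reduced z"
  show ?thesis
  proof (cases "cancels s t")
    case True
    have rr: "reduced (foldr cr w' z)" using rz reduced_foldr_cr by blast
    then show ?thesis using True Cons cr_cr_cancel[OF rr True] by simp
  qed (simp add: Cons)
qed simp

lemma foldr_cr_assoc: "reduced y \<Longrightarrow> reduced z \<Longrightarrow>
    foldr cr (foldr cr x y) z = foldr cr x (foldr cr y z)"
  by (induction x) (auto simp: foldr_cr_cr reduced_foldr_cr)

lemma foldr_cr_append_red: "reduced (u @ v) \<Longrightarrow> foldr cr u v = u @ v"
proof (induction u)
  case (Cons s u)
  then have "foldr cr u v = u @ v" by (simp add: reduced_Cons)
  then show ?case using Cons.prems by (cases "u @ v") (auto simp: reduced_Cons)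
qed simp

lemma canc_foldl: "reduced (rev xs) \<Longrightarrow> reduced y \<Longrightarrow> canc xs y = foldl (\<lambda>w s. cr s w) y xs"
proof (induction xs y rule: canc.induct)
  case (1 ys) then show ?case by simp
next
  case (2 x xs)
  have "foldl (\<lambda>w s. cr s w) [x] xs = foldr cr (rev xs) [x]" by (simp add: foldr_conv_foldl)
  also have "\<dots> = rev xs @ [x]" using 2 by (intro foldr_cr_append_red) simp
  finally show ?case by simp
next
  case (3 x xs y ys)
  have rxs: "reduced (rev xs)" using 3(2) by (simp add: reduced_append)
  show ?case
  proof (cases "cancels x y")
    case True
    then show ?thesis using 3 rxs by (simp add: cancels_def reduced_Cons)
  next
    case False
    have "foldl (\<lambda>w s. cr s w) (x#y#ys) xs = foldr cr (rev xs) (x#y#ys)" by (simp add: foldr_conv_foldl)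
    also have "\<dots> = rev xs @ x # y # ys"
      using 3(2,3) False by (intro foldr_cr_append_red) (auto simp: reduced_append)
    finally show ?thesis using False by (auto simp: cancels_def)
  qed
qed

lemma mulw_foldr: "reduced x \<Longrightarrow> reduced y \<Longrightarrow> mulw x y = foldr cr x y"
  by (simp add: mulw_def canc_foldl reduced_rev foldr_conv_foldl)

lemma reduced_mulw: "reduced x \<Longrightarrow> reduced y \<Longrightarrow> reduced (mulw x y)"
  by (simp add: mulw_foldr reduced_foldr_cr)

lemma mulw_assoc: "reduced x \<Longrightarrow> reduced y \<Longrightarrow> reduced z \<Longrightarrow>
   mulw (mulw x y) z = mulw x (mulw y z)"
  by (simp add: mulw_foldr reduced_foldr_cr foldr_cr_assoc)

lemma mulw_append: "reduced (u @ v) \<Longrightarrow> mulw u v = u @ v"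
  by (simp add: mulw_foldr reduced_append foldr_cr_append_red)

lemma mulw_Nil_right[simp]: "mulw x [] = x"
  unfolding mulw_def by (cases "rev x") (auto simp: rev_swap)

lemma mulw_Nil_left[simp]: "mulw [] x = x"
  by (simp add: mulw_def)

lemma foldl_flip_cancel: "foldl (\<lambda>w s. cr s w) (map flipl xs @ z) xs = z"
  by (induction xs) (auto simp: flipl_def cancels_def)

lemma mulw_invw: "reduced w \<Longrightarrow> mulw w (invw w) = []"
proof -
  assume r: "reduced w"
  have "mulw w (invw w) = foldr cr w (invw w)" using r by (simp add: mulw_foldr)
  also have "\<dots> = foldl (\<lambda>a s. cr s a) (map flipl (rev w) @ []) (rev w)"
    by (simp add: foldr_conv_foldl invw_alt rev_map)
  also have "\<dots> = []" by (rule foldl_flip_cancel)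
  finally show ?thesis .
qed

lemma mulw_invw_left: "reduced w \<Longrightarrow> mulw (invw w) w = []"
  using mulw_invw[of "invw w"] by simp

lemma mulw_single: "reduced d \<Longrightarrow>
  mulw d [t] = (if d \<noteq> [] \<and> cancels (last d) t then butlast d else d @ [t])"
proof (cases "d \<noteq> [] \<and> cancels (last d) t")
  case True
  assume r: "reduced d"
  obtain u x where d: "d = u @ [x]" using True by (metis append_butlast_last_id)
  have "mulw d [t] = foldr cr u (cr x [t])" using r by (simp add: mulw_foldr d)
  also have "\<dots> = u" using True d r by (simp add: reduced_append foldr_cr_append_red[of u "[]", simplified])
  finally show ?thesis using True d by simp
next
  case False
  assume r: "reduced d"
  have "reduced (d @ [t])" using r False by (auto simp: reduced_append)
  then show ?thesis using False mulw_append by metis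
qed

lemma flipl_flipl[simp]: "flipl (flipl s) = s" by (simp add: flipl_def)
lemma invw_single[simp]: "invw [s] = [flipl s]" by (simp add: invw_alt)
lemma cancels_flipl[simp]: "cancels s (flipl s)" "cancels (flipl s) s" by (auto simp: cancels_def flipl_def)
lemma invw_Nil[simp]: "invw [] = []" by (simp add: invw_def)

lemma act_Nil[simp]: "act [] X = X" by (simp add: act_def)

lemma mulw_single_flip: "mulw [s] [flipl s] = []" "mulw [flipl s] [s] = []"
  by (simp_all add: mulw_def flipl_def)

lemma act_append: assumes X: "X \<subseteq> Collect reduced" and r: "reduced (x @ w)"
  shows "act (x @ w) X = act x (act w X)"
proof -
  have rx: "reduced x" and rw: "reduced w" using r by (auto simp: reduced_append)
  have "mulw (mulw g (invw w)) (invw x) = mulw g (invw (x @ w))" if "g \<in> X" for g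
  proof -
    have "mulw (mulw g (invw w)) (invw x) = mulw g (mulw (invw w) (invw x))"
      using that X rx rw by (intro mulw_assoc) auto
    also have "mulw (invw w) (invw x) = invw (x @ w)"
      using r by (simp add: invw_append[symmetric] mulw_append)
    finally show ?thesis .
  qed
  then show ?thesis by (simp add: act_def image_image cong: image_cong)
qed

lemma act_reduced: "X \<subseteq> Collect reduced \<Longrightarrow> reduced g \<Longrightarrow> act g X \<subseteq> Collect reduced"
  by (auto simp: act_def reduced_mulw)

lemma mem_act: assumes X: "X \<subseteq> Collect reduced" and g: "reduced g"
  shows "v \<in> act g X \<longleftrightarrow> reduced v \<and> mulw v g \<in> X"
proof
  assume "v \<in> act g X"
  then obtain y where y: "y \<in> X" "v = mulw y (invw g)" by (auto simp: act_def)
  have "mulw v g = mulw y (mulw (invw g) g)" using y X g by (simp only:) (intro mulw_assoc, auto)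
  also have "\<dots> = y" using g by (simp add: mulw_invw_left)
  finally show "reduced v \<and> mulw v g \<in> X" using y X g by (auto simp: reduced_mulw)
next
  assume h: "reduced v \<and> mulw v g \<in> X"
  have "mulw (mulw v g) (invw g) = v" using h g by (simp add: mulw_assoc mulw_invw)
  then show "v \<in> act g X" using h unfolding act_def by (metis image_eqI)
qed

lemma act_inv: assumes X: "X \<subseteq> Collect reduced"
  shows "act [flipl s] (act [s] X) = X"
proof -
  have "mulw (mulw g [flipl s]) [s] = g" if "g \<in> X" for g
  proof -
    have "mulw (mulw g [flipl s]) [s] = mulw g (mulw [flipl s] [s])"
      using that X by (intro mulw_assoc) auto
    then show ?thesis by (simp add: mulw_single_flip)
  qed
  then show ?thesis by (simp add: act_def image_image cong: image_cong)
qed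

lemma mulw_append_invw: "reduced (u @ w) \<Longrightarrow> mulw (u @ w) (invw w) = u"
proof -
  assume r: "reduced (u @ w)"
  then have ru: "reduced u" and rw: "reduced w" by (auto simp: reduced_append)
  have "mulw (u @ w) (invw w) = mulw (mulw u w) (invw w)" using r by (simp add: mulw_append)
  also have "\<dots> = mulw u (mulw w (invw w))" using ru rw by (simp add: mulw_assoc)
  finally show ?thesis using rw by (simp add: mulw_invw)
qed

lemma length_mulw_single: "reduced d \<Longrightarrow> length (mulw d [t]) \<le> Suc (length d)"
  by (auto simp: mulw_single)

lemma length_mulw_single2: "reduced d \<Longrightarrow> length d \<le> Suc (length (mulw d [t]))"
  by (simp add: mulw_single)


definition codew :: "('s word set \<Rightarrow> 's \<Rightarrow> 't) \<Rightarrow> 's word set \<Rightarrow> 's word \<Rightarrow> 't word" where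
  "codew F \<xi> \<alpha> = map (\<lambda>i. (F (if snd (\<alpha>!i) then act (drop (Suc i) \<alpha>) \<xi> else act (drop i \<alpha>) \<xi>)
                              (fst (\<alpha>!i)), snd (\<alpha>!i))) [0..<length \<alpha>]"

definition code :: "('s word set \<Rightarrow> 's \<Rightarrow> 't) \<Rightarrow> 's word set \<Rightarrow> 't word set" where
  "code F \<xi> = codew F \<xi> ` \<xi>"

lemma length_codew[simp]: "length (codew F \<xi> \<alpha>) = length \<alpha>"
  by (simp add: codew_def)

lemma nth_codew: "i < length \<alpha> \<Longrightarrow> codew F \<xi> \<alpha> ! i =
   (F (if snd (\<alpha>!i) then act (drop (Suc i) \<alpha>) \<xi> else act (drop i \<alpha>) \<xi>) (fst (\<alpha>!i)), snd (\<alpha>!i))"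
  by (simp add: codew_def)

lemma codew_Nil[simp]: "codew F \<xi> [] = []"
  by (simp add: codew_def)

lemma codew_single: "codew F \<xi> [s] = [(F (if snd s then \<xi> else act [s] \<xi>) (fst s), snd s)]"
  by (simp add: codew_def)

lemma drop_codew: "drop j (codew F \<xi> \<alpha>) = codew F \<xi> (drop j \<alpha>)"
  by (rule nth_equalityI) (auto simp: nth_codew add.commute[of j] add_Suc_right[symmetric] simp del: add_Suc_right)

lemma codew_append: assumes X: "X \<subseteq> Collect reduced" and r: "reduced (u @ w)"
  shows "codew F X (u @ w) = codew F (act w X) u @ codew F X w"
proof (rule nth_equalityI)
  show "length (codew F X (u @ w)) = length (codew F (act w X) u @ codew F X w)" by simp
next
  fix i assume i: "i < length (codew F X (u @ w))"
  show "codew F X (u @ w) ! i = (codew F (act w X) u @ codew F X w) ! i"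
  proof (cases "i < length u")
    case True
    have d1: "drop (Suc i) (u @ w) = drop (Suc i) u @ w" and d2: "drop i (u @ w) = drop i u @ w"
      using True by auto
    have r1: "reduced (drop (Suc i) u @ w)" "reduced (drop i u @ w)"
      using reduced_drop[OF r, of "Suc i"] reduced_drop[OF r, of i] d1 d2 by auto
    show ?thesis using True i
      by (simp add: nth_codew nth_append d1 d2 act_append[OF X r1(1)] act_append[OF X r1(2)])
  next
    case False
    have d1: "drop (Suc i) (u @ w) = drop (Suc (i - length u)) w" and d2: "drop i (u @ w) = drop (i - length u) w"
      using False by (auto simp: Suc_diff_le)
    show ?thesis using False i by (simp add: nth_codew nth_append d1 d2 Suc_diff_le)
  qed
qed

lemma reduced_codew: assumes g: "\<And>\<zeta> a. g (F \<zeta> a) = a" and r: "reduced \<alpha>"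
  shows "reduced (codew F \<xi> \<alpha>)"
  unfolding reduced_def
proof (intro allI impI notI)
  fix i assume i: "Suc i < length (codew F \<xi> \<alpha>)"
    and c: "fst (codew F \<xi> \<alpha> ! i) = fst (codew F \<xi> \<alpha> ! Suc i) \<and> snd (codew F \<xi> \<alpha> ! i) \<noteq> snd (codew F \<xi> \<alpha> ! Suc i)"
  have "fst (\<alpha>!i) = fst (\<alpha>!Suc i)" using c i arg_cong[where f=g, OF conjunct1[OF c]]
    by (simp add: nth_codew g)
  moreover have "snd (\<alpha>!i) \<noteq> snd (\<alpha>!Suc i)" using c i by (simp add: nth_codew)
  ultimately show False using r i unfolding reduced_def by auto
qed

lemma last_codew: "\<alpha> \<noteq> [] \<Longrightarrow> \<exists>Z. last (codew F \<xi> \<alpha>) = (F Z (fst (last \<alpha>)), snd (last \<alpha>))"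
proof -
  assume a: "\<alpha> \<noteq> []"
  then have "codew F \<xi> \<alpha> \<noteq> []" by (metis length_codew length_0_conv)
  then show ?thesis using a by (auto simp: last_conv_nth nth_codew)
qed

locale sub =
  fixes A :: "'s set" and Om :: "'s word set set"
  assumes finA: "finite A" and subCC: "Om \<subseteq> CC A"
    and inv: "\<And>\<xi> \<alpha>. \<xi> \<in> Om \<Longrightarrow> \<alpha> \<in> \<xi> \<Longrightarrow> act \<alpha> \<xi> \<in> Om"
begin

lemma FG_Om: "\<xi> \<in> Om \<Longrightarrow> \<xi> \<subseteq> FG A"
  using subCC by (auto simp: CC_def convex_def)

lemma red_Om: "\<xi> \<in> Om \<Longrightarrow> \<xi> \<subseteq> Collect reduced"
  using FG_Om by (auto simp: FG_def)

lemma nil_Om: "\<xi> \<in> Om \<Longrightarrow> [] \<in> \<xi>"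
  using subCC by (auto simp: CC_def convex_def)

lemma drop_Om: "\<xi> \<in> Om \<Longrightarrow> \<alpha> \<in> \<xi> \<Longrightarrow> drop k \<alpha> \<in> \<xi>"
  using subCC by (auto simp: CC_def convex_def)

lemma red_mem: "\<xi> \<in> Om \<Longrightarrow> \<alpha> \<in> \<xi> \<Longrightarrow> reduced \<alpha>"
  using red_Om by auto

lemma single_in: assumes "\<xi> \<in> Om" "s # \<gamma> \<in> \<xi>" shows "[s] \<in> act \<gamma> \<xi>"
proof -
  have r: "reduced (s # \<gamma>)" using assms red_mem by blast
  have "mulw [s] \<gamma> = s # \<gamma>" using r mulw_append[of "[s]" \<gamma>] by simp
  then show ?thesis using assms r by (subst mem_act[OF red_Om]) (auto simp: reduced_Cons)
qed

lemma code_red: assumes g: "\<And>\<zeta> a. g (F \<zeta> a) = a" and "\<xi> \<in> Om"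
  shows "code F \<xi> \<subseteq> Collect reduced"
  using assms red_mem reduced_codew[of g F, OF g] by (auto simp: code_def)

lemma codew_mulw_single:
  assumes g: "\<And>\<zeta> a. g (F \<zeta> a) = a" and z: "\<zeta> \<in> Om" and s: "[s] \<in> \<zeta>" and d: "\<delta> \<in> \<zeta>"
  shows "codew F (act [s] \<zeta>) (mulw \<delta> [flipl s]) = mulw (codew F \<zeta> \<delta>) (invw (codew F \<zeta> [s]))"
proof -
  define l where "l = (F (if snd s then \<zeta> else act [s] \<zeta>) (fst s), snd s)"
  have cs: "codew F \<zeta> [s] = [l]" by (simp add: codew_single l_def)
  have rz: "\<zeta> \<subseteq> Collect reduced" using red_Om z .
  have rd: "reduced \<delta>" using d rz by auto
  show ?thesis
  proof (cases "\<delta> \<noteq> [] \<and> cancels (last \<delta>) (flipl s)")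
    case True
    then have ls: "last \<delta> = s" by (cases "last \<delta>", cases s) (auto simp: cancels_def flipl_def)
    obtain v where dv: "\<delta> = v @ [s]" using True ls by (metis append_butlast_last_id)
    have "codew F \<zeta> \<delta> = codew F (act [s] \<zeta>) v @ [l]"
      using codew_append[OF rz, of v "[s]" F] rd dv cs by simp
    moreover have "mulw \<delta> [flipl s] = v" using mulw_single[OF rd] True dv by simp
    moreover have "reduced (codew F (act [s] \<zeta>) v @ [l])"
      using reduced_codew[of g F, OF g rd, of \<zeta>] \<open>codew F \<zeta> \<delta> = _\<close> by simp
    ultimately show ?thesis using cs
      by (simp add: mulw_single flipl_def cancels_def)
  next
    case False
    have m: "mulw \<delta> [flipl s] = \<delta> @ [flipl s]" using mulw_single[OF rd] False by auto
    have r2: "reduced (\<delta> @ [flipl s])" using rd False by (auto simp: reduced_append)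
    have X2: "act [s] \<zeta> \<subseteq> Collect reduced" using act_reduced[OF rz] by simp
    have "codew F (act [s] \<zeta>) (\<delta> @ [flipl s]) =
          codew F (act [flipl s] (act [s] \<zeta>)) \<delta> @ codew F (act [s] \<zeta>) [flipl s]"
      by (rule codew_append[OF X2 r2])
    also have "act [flipl s] (act [s] \<zeta>) = \<zeta>" by (rule act_inv[OF rz])
    also have "codew F (act [s] \<zeta>) [flipl s] = [flipl l]"
      using act_inv[OF rz, of s] by (cases s) (auto simp: codew_single l_def flipl_def)
    finally have e1: "codew F (act [s] \<zeta>) (mulw \<delta> [flipl s]) = codew F \<zeta> \<delta> @ [flipl l]" using m by simp
    have nc: "\<not> (codew F \<zeta> \<delta> \<noteq> [] \<and> cancels (last (codew F \<zeta> \<delta>)) (flipl l))"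
    proof
      assume h: "codew F \<zeta> \<delta> \<noteq> [] \<and> cancels (last (codew F \<zeta> \<delta>)) (flipl l)"
      then have dn: "\<delta> \<noteq> []" by auto
      obtain Z where lz: "last (codew F \<zeta> \<delta>) = (F Z (fst (last \<delta>)), snd (last \<delta>))"
        using last_codew[OF dn] by blast
      have "fst (last \<delta>) = fst s" using h lz
        by (auto simp: cancels_def flipl_def l_def) (metis g)+
      moreover have "snd (last \<delta>) = snd s" using h lz by (auto simp: cancels_def flipl_def l_def)
      ultimately have "cancels (last \<delta>) (flipl s)" by (auto simp: cancels_def flipl_def)
      then show False using False dn by simp
    qed
    have "mulw (codew F \<zeta> \<delta>) [flipl l] = codew F \<zeta> \<delta> @ [flipl l]"
      using mulw_single[OF reduced_codew[of g F, OF g rd]] nc by auto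
    then show ?thesis using e1 cs by simp
  qed
qed

lemma equiv1:
  assumes g: "\<And>\<zeta> a. g (F \<zeta> a) = a" and z: "\<zeta> \<in> Om" and s: "[s] \<in> \<zeta>"
  shows "act (codew F \<zeta> [s]) (code F \<zeta>) = code F (act [s] \<zeta>)"
proof -
  have rz: "\<zeta> \<subseteq> Collect reduced" using red_Om z .
  have "act (codew F \<zeta> [s]) (code F \<zeta>) = (\<lambda>\<delta>. mulw (codew F \<zeta> \<delta>) (invw (codew F \<zeta> [s]))) ` \<zeta>"
    by (simp add: act_def code_def image_image)
  also have "\<dots> = (\<lambda>\<delta>. codew F (act [s] \<zeta>) (mulw \<delta> [flipl s])) ` \<zeta>"
    using codew_mulw_single[of g F, OF g z s] by (simp cong: image_cong)
  also have "\<dots> = code F (act [s] \<zeta>)"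
    by (simp add: code_def act_def image_image)
  finally show ?thesis .
qed

lemma equiv:
  assumes g: "\<And>\<zeta> a. g (F \<zeta> a) = a"
  shows "\<xi> \<in> Om \<Longrightarrow> \<gamma> \<in> \<xi> \<Longrightarrow> act (codew F \<xi> \<gamma>) (code F \<xi>) = code F (act \<gamma> \<xi>)"
proof (induction \<gamma>)
  case Nil then show ?case by simp
next
  case (Cons s \<gamma>)
  have rx: "\<xi> \<subseteq> Collect reduced" using red_Om Cons.prems(1) .
  have r: "reduced (s # \<gamma>)" using Cons.prems red_mem by blast
  have gi: "\<gamma> \<in> \<xi>" using drop_Om[OF Cons.prems, of 1] by simp
  define \<zeta> where "\<zeta> = act \<gamma> \<xi>"
  have z: "\<zeta> \<in> Om" using inv[OF Cons.prems(1) gi] by (simp add: \<zeta>_def)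
  have s: "[s] \<in> \<zeta>" using single_in[OF Cons.prems] by (simp add: \<zeta>_def)
  have dec: "codew F \<xi> (s # \<gamma>) = codew F \<zeta> [s] @ codew F \<xi> \<gamma>"
    using codew_append[OF rx, of "[s]" \<gamma> F] r by (simp add: \<zeta>_def)
  have "act (codew F \<xi> (s # \<gamma>)) (code F \<xi>) = act (codew F \<zeta> [s]) (act (codew F \<xi> \<gamma>) (code F \<xi>))"
    unfolding dec using reduced_codew[of g F, OF g r, of \<xi>] dec
    by (intro act_append code_red[of g F, OF g Cons.prems(1)]) simp
  also have "\<dots> = act (codew F \<zeta> [s]) (code F \<zeta>)" using Cons.IH[OF Cons.prems(1) gi] by (simp add: \<zeta>_def)
  also have "\<dots> = code F (act [s] \<zeta>)" by (rule equiv1[of g F, OF g z s])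
  also have "act [s] \<zeta> = act (s # \<gamma>) \<xi>" using act_append[OF rx, of "[s]" \<gamma>] r by (simp add: \<zeta>_def)
  finally show ?case .
qed

end


definition Tn :: "nat \<Rightarrow> 'a sym word set \<Rightarrow> 'a sym \<Rightarrow> 'a sym" where
  "Tn n \<zeta> a = Tri (ball n (act [(a,True)] \<zeta>)) a (ball n \<zeta>)"

definition stepF :: "('a sym word set \<Rightarrow> 'a sym \<Rightarrow> 'a sym) \<Rightarrow> 'a sym word set \<Rightarrow> 'a sym \<Rightarrow> 'a sym" where
  "stepF F \<zeta> a = Tri (ball 1 (code F (act [(a,True)] \<zeta>))) (F \<zeta> a) (ball 1 (code F \<zeta>))"

fun Fk :: "nat \<Rightarrow> 'a sym word set \<Rightarrow> 'a sym \<Rightarrow> 'a sym" where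
  "Fk 0 = (\<lambda>\<zeta> a. a)"
| "Fk (Suc k) = stepF (Fk k)"

fun middle :: "'a sym \<Rightarrow> 'a sym" where
  "middle (Tri X a Y) = a"
| "middle (Base x) = Base x"

fun basek :: "nat \<Rightarrow> 'a sym \<Rightarrow> 'a sym" where
  "basek 0 x = x"
| "basek (Suc k) x = basek k (middle x)"

lemma basek_Fk: "basek k (Fk k \<zeta> a) = a"
  by (induction k arbitrary: \<zeta> a) (auto simp: stepF_def)

lemma middle_Tn: "middle (Tn n \<zeta> a) = a"
  by (simp add: Tn_def)

lemma codew_F0: "codew (\<lambda>\<zeta> a. a) \<xi> \<alpha> = \<alpha>"
  by (rule nth_equalityI) (auto simp: nth_codew)

lemma code_F0: "code (Fk 0) \<xi> = \<xi>"
  by (simp add: code_def codew_F0)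

definition sball :: "nat \<Rightarrow> 's word set \<Rightarrow> 's word set" where
  "sball n X = {w \<in> X. length w \<le> n}"

lemma ball_sball: "ball n X = Abs_fset (sball n X)"
  by (simp add: ball_def sball_def)

lemma Abs_fset_eq: "finite S \<Longrightarrow> finite S' \<Longrightarrow> Abs_fset S = Abs_fset S' \<longleftrightarrow> S = S'"
  by (simp add: Abs_fset_inject)

lemma sball_code: "sball n (code F \<zeta>) = codew F \<zeta> ` sball n \<zeta>"
  by (auto simp: sball_def code_def)

locale subs = sub A Om for A :: "'a sym set" and Om :: "'a sym word set set"
begin

lemma fin_sball: assumes "\<zeta> \<in> Om" shows "finite (sball n \<zeta>)"
proof -
  have "sball n \<zeta> \<subseteq> {xs. set xs \<subseteq> A \<times> UNIV \<and> length xs \<le> n}"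
    using FG_Om[OF assms] by (force simp: sball_def FG_def)
  moreover have "finite {xs. set xs \<subseteq> A \<times> (UNIV::bool set) \<and> length xs \<le> n}"
    by (rule finite_lists_length_le) (simp add: finA)
  ultimately show ?thesis by (rule finite_subset)
qed

lemma fin_sball_code: "\<zeta> \<in> Om \<Longrightarrow> finite (sball n (code F \<zeta>))"
  by (simp add: sball_code fin_sball)

lemma act_pos: "\<zeta> \<in> Om \<Longrightarrow> [s] \<in> \<zeta> \<Longrightarrow> act [s] \<zeta> \<in> Om"
  using inv by blast

lemma flip_in: assumes "\<zeta> \<in> Om" "[s] \<in> \<zeta>" shows "[flipl s] \<in> act [s] \<zeta>"
  using assms by (subst mem_act[OF red_Om]) (auto simp: mulw_single_flip nil_Om)

lemma zeta_step: assumes x: "\<xi> \<in> Om" and a: "\<alpha> \<in> \<xi>" and i: "i < length \<alpha>"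
  shows "act (drop i \<alpha>) \<xi> = act [\<alpha>!i] (act (drop (Suc i) \<alpha>) \<xi>)"
proof -
  have d: "drop i \<alpha> = [\<alpha>!i] @ drop (Suc i) \<alpha>" using i by (simp add: Cons_nth_drop_Suc)
  have "reduced (drop i \<alpha>)" using red_mem[OF x a] reduced_drop by blast
  then show ?thesis using d act_append[OF red_Om[OF x], of "[\<alpha>!i]" "drop (Suc i) \<alpha>"] by simp
qed

lemma zeta_step_inv: assumes x: "\<xi> \<in> Om" and a: "\<alpha> \<in> \<xi>" and i: "i < length \<alpha>"
  shows "act (drop (Suc i) \<alpha>) \<xi> = act [flipl (\<alpha>!i)] (act (drop i \<alpha>) \<xi>)"
  using zeta_step[OF assms] act_inv[OF red_Om[OF inv[OF x drop_Om[OF x a]]]] by simp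

lemma phiw_code: assumes x: "\<xi> \<in> Om" and a: "\<alpha> \<in> \<xi>"
  shows "phiw n \<xi> \<alpha> = codew (Tn n) \<xi> \<alpha>"
proof (rule nth_equalityI)
  show "length (phiw n \<xi> \<alpha>) = length (codew (Tn n) \<xi> \<alpha>)" by (simp add: phiw_def)
next
  fix i assume "i < length (phiw n \<xi> \<alpha>)"
  then have i: "i < length \<alpha>" by (simp add: phiw_def)
  obtain b e where be: "\<alpha>!i = (b,e)" by fastforce
  show "phiw n \<xi> \<alpha> ! i = codew (Tn n) \<xi> \<alpha> ! i"
  proof (cases e)
    case True
    then show ?thesis using i be zeta_step[OF x a i]
      by (simp add: phiw_def nth_codew Tn_def)
  next
    case False
    then show ?thesis using i be zeta_step_inv[OF x a i]
      by (simp add: phiw_def nth_codew Tn_def flipl_def)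
  qed
qed

lemma phi_code: "\<xi> \<in> Om \<Longrightarrow> phi n \<xi> = code (Tn n) \<xi>"
  by (simp add: phi_def code_def phiw_code cong: image_cong)

lemma phi1_code: assumes g: "\<And>\<zeta> a. g (F \<zeta> a) = a" and x: "\<xi> \<in> Om"
  shows "phi 1 (code F \<xi>) = code (stepF F) \<xi>"
proof -
  have "phiw 1 (code F \<xi>) (codew F \<xi> \<alpha>) = codew (stepF F) \<xi> \<alpha>" if a: "\<alpha> \<in> \<xi>" for \<alpha>
  proof (rule nth_equalityI)
    show "length (phiw 1 (code F \<xi>) (codew F \<xi> \<alpha>)) = length (codew (stepF F) \<xi> \<alpha>)"
      by (simp add: phiw_def)
  next
    fix i assume "i < length (phiw 1 (code F \<xi>) (codew F \<xi> \<alpha>))"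
    then have i: "i < length \<alpha>" by (simp add: phiw_def)
    have eq: "act (drop j (codew F \<xi> \<alpha>)) (code F \<xi>) = code F (act (drop j \<alpha>) \<xi>)" for j
      by (simp add: drop_codew equiv[of g F, OF g x drop_Om[OF x a]])
    obtain b e where be: "\<alpha>!i = (b,e)" by fastforce
    show "phiw 1 (code F \<xi>) (codew F \<xi> \<alpha>) ! i = codew (stepF F) \<xi> \<alpha> ! i"
    proof (cases e)
      case True
      then show ?thesis using i be zeta_step[OF x a i] eq
        by (simp add: phiw_def nth_codew stepF_def)
    next
      case False
      then show ?thesis using i be zeta_step_inv[OF x a i] eq
        by (simp add: phiw_def nth_codew stepF_def flipl_def)
    qed
  qed
  then show ?thesis by (simp add: phi_def code_def image_image cong: image_cong)
qed

end


lemma sball_mono_eq: "m \<le> n \<Longrightarrow> sball n X = sball n Y \<Longrightarrow> sball m X = sball m Y"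
  unfolding sball_def set_eq_iff by (metis (mono_tags, lifting) le_trans mem_Collect_eq)

context subs
begin

lemma sball0: "\<zeta> \<in> Om \<Longrightarrow> sball 0 \<zeta> = {[]}"
  using nil_Om by (auto simp: sball_def)

lemma BL1: assumes z: "\<zeta> \<in> Om" "\<zeta>' \<in> Om" and e: "sball (Suc k) \<zeta> = sball (Suc k) \<zeta>'"
  shows "sball k (act [s] \<zeta>) = sball k (act [s] \<zeta>')"
proof -
  have *: "sball k (act [s] X) \<subseteq> sball k (act [s] Y)"
    if X: "X \<in> Om" and Y: "Y \<in> Om" and e: "sball (Suc k) X = sball (Suc k) Y" for X Y
  proof
    fix v assume "v \<in> sball k (act [s] X)"
    then have v: "reduced v" "mulw v [s] \<in> X" "length v \<le> k"
      by (auto simp: sball_def mem_act[OF red_Om[OF X]])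
    have "length (mulw v [s]) \<le> Suc k" using length_mulw_single[OF v(1), of s] v(3) by simp
    then have "mulw v [s] \<in> sball (Suc k) Y" using e v(2) by (auto simp: sball_def)
    then show "v \<in> sball k (act [s] Y)" using v
      by (auto simp: sball_def mem_act[OF red_Om[OF Y]])
  qed
  show ?thesis using *[OF z e] *[OF z(2,1) e[symmetric]] by blast
qed


lemma code_single_pos: assumes "\<zeta> \<in> Om"
  shows "[(b,True)] \<in> code F \<zeta> \<longleftrightarrow> (\<exists>a. [(a,True)] \<in> \<zeta> \<and> b = F \<zeta> a)"
proof
  assume "[(b,True)] \<in> code F \<zeta>"
  then obtain w where w: "w \<in> \<zeta>" "codew F \<zeta> w = [(b,True)]" by (auto simp: code_def)
  then have "length w = 1" by (metis length_codew length_Cons list.size(3) One_nat_def)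
  then obtain s where s: "w = [s]" by (cases w) auto
  obtain a e where ae: "s = (a,e)" by fastforce
  have c1: "codew F \<zeta> [s] = [(F (if e then \<zeta> else act [s] \<zeta>) a, e)]"
    using ae by (simp only: codew_single fst_conv snd_conv)
  have h: "[(F (if e then \<zeta> else act [s] \<zeta>) a, e)] = [(b,True)]" using w(2) unfolding s c1 .
  then have e: "e" by simp
  from h have "b = F \<zeta> a" unfolding if_P[OF e] by simp
  then show "\<exists>a. [(a,True)] \<in> \<zeta> \<and> b = F \<zeta> a" using w s ae e by auto
next
  assume "\<exists>a. [(a,True)] \<in> \<zeta> \<and> b = F \<zeta> a"
  then obtain a where a: "[(a,True)] \<in> \<zeta>" "b = F \<zeta> a" by blast
  have "codew F \<zeta> [(a,True)] = [(b,True)]" using a by (simp only: codew_single) simp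
  then show "[(b,True)] \<in> code F \<zeta>" unfolding code_def using a(1) by (metis image_eqI)
qed

lemma act_code_pos: assumes g: "\<And>\<zeta> a. g (F \<zeta> a) = a" and z: "\<zeta> \<in> Om" and a: "[(a,True)] \<in> \<zeta>"
  shows "act [(F \<zeta> a, True)] (code F \<zeta>) = code F (act [(a,True)] \<zeta>)"
proof -
  have "codew F \<zeta> [(a,True)] = [(F \<zeta> a, True)]" by (simp only: codew_single) simp
  then show ?thesis using equiv[of g F, OF g z a] by simp
qed

lemma iter: "(ball1_step ^^ k) (A, Om) =
   (if k = 0 then A else {Fk k \<zeta> a | \<zeta> a. \<zeta> \<in> Om \<and> [(a,True)] \<in> \<zeta>}, code (Fk k) ` Om)"
proof (induction k)
  case 0 then show ?case by (simp add: code_def codew_F0)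
next
  case (Suc k)
  define X where "X = fst ((ball1_step ^^ k) (A, Om))"
  have XI: "X = (if k = 0 then A else {Fk k \<zeta> a | \<zeta> a. \<zeta> \<in> Om \<and> [(a,True)] \<in> \<zeta>})"
    using Suc.IH by (simp add: X_def)
  have inX: "Fk k \<zeta> a \<in> X" if "\<zeta> \<in> Om" "[(a,True)] \<in> \<zeta>" for \<zeta> a
  proof (cases "k = 0")
    case True
    then show ?thesis using XI FG_Om[OF that(1)] that(2) by (auto simp: FG_def)
  next
    case False then show ?thesis using XI that by auto
  qed
  have st: "(ball1_step ^^ Suc k) (A, Om) = ball1_step (X, code (Fk k) ` Om)"
    using Suc.IH by (simp add: X_def)
  have g: "\<And>\<zeta> a. basek k (Fk k \<zeta> a) = a" by (rule basek_Fk)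
  have sndE: "ball_shift 1 (code (Fk k) ` Om) = code (Fk (Suc k)) ` Om"
  proof -
    have "\<And>\<xi>. \<xi> \<in> Om \<Longrightarrow> phi 1 (code (Fk k) \<xi>) = code (Fk (Suc k)) \<xi>"
      using phi1_code[of "basek k" "Fk k", OF g] by simp
    then show ?thesis unfolding ball_shift_def image_image by (rule image_cong[OF refl])
  qed
  have fstE: "ball_alph 1 X (code (Fk k) ` Om) = {Fk (Suc k) \<zeta> a | \<zeta> a. \<zeta> \<in> Om \<and> [(a,True)] \<in> \<zeta>}"
  proof (rule set_eqI, rule iffI)
    fix x assume "x \<in> ball_alph 1 X (code (Fk k) ` Om)"
    then obtain \<eta> b where hb: "\<eta> \<in> code (Fk k) ` Om" "b \<in> X" "[(b,True)] \<in> \<eta>"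
       "x = Tri (ball 1 (act [(b,True)] \<eta>)) b (ball 1 \<eta>)"
      unfolding ball_alph_def mem_Collect_eq by auto
    then obtain \<zeta> where z: "\<zeta> \<in> Om" "\<eta> = code (Fk k) \<zeta>" by auto
    have zb: "\<zeta> \<in> Om" "b \<in> X" "[(b,True)] \<in> code (Fk k) \<zeta>"
      "x = Tri (ball 1 (act [(b,True)] (code (Fk k) \<zeta>))) b (ball 1 (code (Fk k) \<zeta>))"
      using hb z by auto
    obtain a where a: "[(a,True)] \<in> \<zeta>" "b = Fk k \<zeta> a" using code_single_pos[OF zb(1), of b "Fk k"] zb(3) by blast
    have "x = Fk (Suc k) \<zeta> a"
      using zb(4) a(2) act_code_pos[of "basek k" "Fk k", OF g zb(1) a(1)] by (simp add: stepF_def)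
    then show "x \<in> {Fk (Suc k) \<zeta> a | \<zeta> a. \<zeta> \<in> Om \<and> [(a,True)] \<in> \<zeta>}" unfolding mem_Collect_eq using zb(1) a(1) by (intro exI[of _ \<zeta>] exI[of _ a] conjI)
  next
    fix x assume "x \<in> {Fk (Suc k) \<zeta> a | \<zeta> a. \<zeta> \<in> Om \<and> [(a,True)] \<in> \<zeta>}"
    then obtain \<zeta> a where za: "\<zeta> \<in> Om" "[(a,True)] \<in> \<zeta>" "x = Fk (Suc k) \<zeta> a" by auto
    have "[(Fk k \<zeta> a, True)] \<in> code (Fk k) \<zeta>" using code_single_pos[OF za(1), of "Fk k \<zeta> a" "Fk k"] za(2) by blast
    moreover have "x = Tri (ball 1 (act [(Fk k \<zeta> a,True)] (code (Fk k) \<zeta>))) (Fk k \<zeta> a) (ball 1 (code (Fk k) \<zeta>))"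
      using za(3) act_code_pos[of "basek k" "Fk k", OF g za(1) za(2)] by (simp add: stepF_def)
    ultimately show "x \<in> ball_alph 1 X (code (Fk k) ` Om)"
      unfolding ball_alph_def mem_Collect_eq
      by (intro exI[of _ "code (Fk k) \<zeta>"] exI[of _ "Fk k \<zeta> a"] conjI imageI inX za)
  qed
  have "ball1_step (X, code (Fk k) ` Om) = (ball_alph 1 X (code (Fk k) ` Om), ball_shift 1 (code (Fk k) ` Om))"
    by (simp add: ball1_step_def)
  then show ?case unfolding st using sndE fstE by simp
qed

end


context subs
begin

definition Dprop :: "nat \<Rightarrow> bool" where
  "Dprop k \<longleftrightarrow> (\<forall>\<zeta> \<zeta>' a a'. \<zeta> \<in> Om \<longrightarrow> \<zeta>' \<in> Om \<longrightarrow> [(a,True)] \<in> \<zeta> \<longrightarrow> [(a',True)] \<in> \<zeta>' \<longrightarrow>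
     (Fk k \<zeta> a = Fk k \<zeta>' a' \<longleftrightarrow> a = a' \<and> sball k \<zeta> = sball k \<zeta>' \<and>
        sball k (act [(a,True)] \<zeta>) = sball k (act [(a',True)] \<zeta>')))"

lemma DpropD: "Dprop k \<Longrightarrow> \<zeta> \<in> Om \<Longrightarrow> \<zeta>' \<in> Om \<Longrightarrow> [(a,True)] \<in> \<zeta> \<Longrightarrow> [(a',True)] \<in> \<zeta>' \<Longrightarrow>
     (Fk k \<zeta> a = Fk k \<zeta>' a' \<longleftrightarrow> a = a' \<and> sball k \<zeta> = sball k \<zeta>' \<and>
        sball k (act [(a,True)] \<zeta>) = sball k (act [(a',True)] \<zeta>'))"
  unfolding Dprop_def by blast

lemma sball_single: "w \<in> sball 1 X \<longleftrightarrow> w \<in> X \<and> (w = [] \<or> (\<exists>s. w = [s]))"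
  by (auto simp: sball_def length_Suc_conv le_Suc_eq)

lemma single_mem_sball: "[s] \<in> X \<Longrightarrow> [s] \<in> sball n X \<longleftrightarrow> n \<ge> 1"
  by (auto simp: sball_def)

lemma K2: assumes D: "Dprop k" and z: "\<zeta> \<in> Om" "\<zeta>' \<in> Om" and e: "sball (Suc k) \<zeta> = sball (Suc k) \<zeta>'"
  shows "sball 1 (code (Fk k) \<zeta>) \<subseteq> sball 1 (code (Fk k) \<zeta>')"
proof
  fix x assume "x \<in> sball 1 (code (Fk k) \<zeta>)"
  then obtain w where w: "w \<in> sball 1 \<zeta>" "x = codew (Fk k) \<zeta> w" by (auto simp: sball_code)
  have e1: "sball 1 \<zeta> = sball 1 \<zeta>'" using sball_mono_eq[OF _ e, of 1] by simp
  have ek: "sball k \<zeta> = sball k \<zeta>'" using sball_mono_eq[OF _ e, of k] by simp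
  have w': "w \<in> sball 1 \<zeta>'" using w e1 by simp
  have "codew (Fk k) \<zeta> w = codew (Fk k) \<zeta>' w"
  proof -
    have "w = [] \<or> (\<exists>s. w = [s])" using w sball_single by blast
    then show ?thesis
    proof
      assume "w = []" then show ?thesis by simp
    next
      assume "\<exists>s. w = [s]"
      then obtain s where s: "w = [s]" by blast
      have sz: "[s] \<in> \<zeta>" "[s] \<in> \<zeta>'" using w w' s by (auto simp: sball_def)
      obtain b e where be: "s = (b,e)" by fastforce
      show ?thesis
      proof (cases e)
        case True
        have "Fk k \<zeta> b = Fk k \<zeta>' b"
          using DpropD[OF D z, of b b] sz be True ek BL1[OF z e, of s] by simp
        then show ?thesis using s be True by (simp add: codew_single)
      next
        case False
        define \<zeta>1 where "\<zeta>1 = act [s] \<zeta>"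
        define \<zeta>1' where "\<zeta>1' = act [s] \<zeta>'"
        have z1: "\<zeta>1 \<in> Om" "\<zeta>1' \<in> Om" using act_pos z sz by (auto simp: \<zeta>1_def \<zeta>1'_def)
        have fs: "flipl s = (b,True)" using be False by (simp add: flipl_def)
        have b1: "[(b,True)] \<in> \<zeta>1" "[(b,True)] \<in> \<zeta>1'"
          using flip_in[OF z(1) sz(1)] flip_in[OF z(2) sz(2)] fs by (auto simp: \<zeta>1_def \<zeta>1'_def)
        have inv1: "act [(b,True)] \<zeta>1 = \<zeta>" "act [(b,True)] \<zeta>1' = \<zeta>'"
          using act_inv[OF red_Om[OF z(1)], of s] act_inv[OF red_Om[OF z(2)], of s] fs
          by (auto simp: \<zeta>1_def \<zeta>1'_def)
        have "Fk k \<zeta>1 b = Fk k \<zeta>1' b"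
          using DpropD[OF D z1 b1] inv1 ek BL1[OF z e, of s] by (simp add: \<zeta>1_def \<zeta>1'_def)
        then show ?thesis using s be False by (simp add: codew_single \<zeta>1_def \<zeta>1'_def)
      qed
    qed
  qed
  then show "x \<in> sball 1 (code (Fk k) \<zeta>')" using w w' by (auto simp: sball_code)
qed

lemma K1: assumes D: "Dprop k" and z: "\<zeta> \<in> Om" "\<zeta>' \<in> Om"
  and e: "sball 1 (code (Fk k) \<zeta>) \<subseteq> sball 1 (code (Fk k) \<zeta>')"
  shows "sball (Suc k) \<zeta> \<subseteq> sball (Suc k) \<zeta>'"
proof
  fix w assume wz: "w \<in> sball (Suc k) \<zeta>"
  then have w: "w \<in> \<zeta>" "length w \<le> Suc k" by (auto simp: sball_def)
  show "w \<in> sball (Suc k) \<zeta>'"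
  proof (cases w rule: rev_exhaust)
    case Nil then show ?thesis using nil_Om[OF z(2)] by (simp add: sball_def)
  next
    case (snoc v s)
    have rw: "reduced w" using red_mem[OF z(1) w(1)] .
    have sz: "[s] \<in> \<zeta>" using drop_Om[OF z(1) w(1), of "length v"] snoc by simp
    have rv: "reduced v" using rw snoc by (simp add: reduced_append)
    have mv: "mulw v [s] = v @ [s]" using rw snoc mulw_append by simp
    have lv: "length v \<le> k" using w(2) snoc by simp
    have "codew (Fk k) \<zeta> [s] \<in> code (Fk k) \<zeta>" using sz unfolding code_def by (rule imageI)
    then have "codew (Fk k) \<zeta> [s] \<in> sball 1 (code (Fk k) \<zeta>)" by (simp add: sball_def)
    then have "codew (Fk k) \<zeta> [s] \<in> sball 1 (code (Fk k) \<zeta>')" using e by blast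
    then obtain w' where w': "w' \<in> sball 1 \<zeta>'" "codew (Fk k) \<zeta>' w' = codew (Fk k) \<zeta> [s]"
      by (auto simp: sball_code)
    then have "length w' = 1" by (metis length_codew length_Cons list.size(3) One_nat_def)
    then obtain s' where s': "w' = [s']" by (cases w') auto
    have sz': "[s'] \<in> \<zeta>'" using w' s' by (auto simp: sball_def)
    obtain b c where bc: "s = (b,c)" by fastforce
    obtain b' c' where bc': "s' = (b',c')" by fastforce
    have eqw: "(Fk k (if c' then \<zeta>' else act [s'] \<zeta>') b', c') = (Fk k (if c then \<zeta> else act [s] \<zeta>) b, c)"
      using w'(2) unfolding s' bc bc' codew_single fst_conv snd_conv by (cases c; cases c'; simp)
    then have cc: "c' = c" by simp
    have key: "s' = s \<and> sball k (act [s] \<zeta>) = sball k (act [s] \<zeta>')"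
    proof (cases c)
      case True
      have "Fk k \<zeta>' b' = Fk k \<zeta> b" using eqw unfolding cc if_P[OF True] by simp
      then show ?thesis using DpropD[OF D z, of b b'] sz sz' bc bc' cc True by auto
    next
      case False
      define \<zeta>1 where "\<zeta>1 = act [s] \<zeta>"
      define \<zeta>1' where "\<zeta>1' = act [s'] \<zeta>'"
      have z1: "\<zeta>1 \<in> Om" "\<zeta>1' \<in> Om" using act_pos z sz sz' by (auto simp: \<zeta>1_def \<zeta>1'_def)
      have b1: "[(b,True)] \<in> \<zeta>1" "[(b',True)] \<in> \<zeta>1'"
        using flip_in[OF z(1) sz] flip_in[OF z(2) sz'] bc bc' cc False
        by (auto simp: \<zeta>1_def \<zeta>1'_def flipl_def)
      have "Fk k \<zeta>1' b' = Fk k \<zeta>1 b" using eqw unfolding cc if_not_P[OF False] by (simp add: \<zeta>1_def \<zeta>1'_def bc bc' cc)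
      then show ?thesis using DpropD[OF D z1 b1] bc bc' cc False by (auto simp: \<zeta>1_def \<zeta>1'_def)
    qed
    have "v \<in> sball k (act [s] \<zeta>)" using rv mv w(1) lv snoc
      by (auto simp: sball_def mem_act[OF red_Om[OF z(1)]])
    then have "v \<in> act [s] \<zeta>'" using key by (auto simp: sball_def)
    then have "v @ [s] \<in> \<zeta>'" using mv by (simp add: mem_act[OF red_Om[OF z(2)]])
    then show ?thesis using snoc w(2) by (simp add: sball_def)
  qed
qed

lemma K: assumes D: "Dprop k" and z: "\<zeta> \<in> Om" "\<zeta>' \<in> Om"
  shows "sball 1 (code (Fk k) \<zeta>) = sball 1 (code (Fk k) \<zeta>') \<longleftrightarrow> sball (Suc k) \<zeta> = sball (Suc k) \<zeta>'"
  using K1[OF D z] K1[OF D z(2,1)] K2[OF D z] K2[OF D z(2,1)] by blast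

lemma Dprop_all: "Dprop k"
proof (induction k)
  case 0
  show ?case unfolding Dprop_def by (auto simp: sball0 act_pos)
next
  case (Suc k)
  show ?case unfolding Dprop_def
  proof (intro allI impI)
    fix \<zeta> \<zeta>' a a' assume z: "\<zeta> \<in> Om" "\<zeta>' \<in> Om" and a: "[(a,True)] \<in> \<zeta>" "[(a',True)] \<in> \<zeta>'"
    have za: "act [(a,True)] \<zeta> \<in> Om" "act [(a',True)] \<zeta>' \<in> Om" using act_pos z a by auto
    have b1: "ball 1 (code (Fk k) X) = ball 1 (code (Fk k) Y) \<longleftrightarrow> sball (Suc k) X = sball (Suc k) Y"
      if "X \<in> Om" "Y \<in> Om" for X Y
    proof -
      have "ball 1 (code (Fk k) X) = ball 1 (code (Fk k) Y) \<longleftrightarrow> sball 1 (code (Fk k) X) = sball 1 (code (Fk k) Y)"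
        unfolding ball_sball by (rule Abs_fset_eq[OF fin_sball_code[OF that(1)] fin_sball_code[OF that(2)]])
      then show ?thesis using K[OF Suc that] by simp
    qed
    have "Fk (Suc k) \<zeta> a = Fk (Suc k) \<zeta>' a' \<longleftrightarrow>
       sball (Suc k) (act [(a,True)] \<zeta>) = sball (Suc k) (act [(a',True)] \<zeta>') \<and>
       (a = a' \<and> sball k \<zeta> = sball k \<zeta>' \<and> sball k (act [(a,True)] \<zeta>) = sball k (act [(a',True)] \<zeta>')) \<and>
       sball (Suc k) \<zeta> = sball (Suc k) \<zeta>'"
      using b1[OF za] b1[OF z] DpropD[OF Suc z a] by (simp add: stepF_def)
    also have "\<dots> \<longleftrightarrow> a = a' \<and> sball (Suc k) \<zeta> = sball (Suc k) \<zeta>' \<and>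
        sball (Suc k) (act [(a,True)] \<zeta>) = sball (Suc k) (act [(a',True)] \<zeta>')"
      using sball_mono_eq[of k "Suc k"] by auto
    finally show "Fk (Suc k) \<zeta> a = Fk (Suc k) \<zeta>' a' \<longleftrightarrow> a = a' \<and> sball (Suc k) \<zeta> = sball (Suc k) \<zeta>' \<and>
        sball (Suc k) (act [(a,True)] \<zeta>) = sball (Suc k) (act [(a',True)] \<zeta>')" .
  qed
qed

end


lemma coord_cont: "continuous_map cfg_top euclidean (\<lambda>\<xi>. u \<in> \<xi>)"
proof -
  have "continuous_map cfg_top euclidean ((\<lambda>f. f u) \<circ> (\<lambda>\<xi> w. w \<in> \<xi>))"
    unfolding cfg_top_def
    by (rule continuous_map_pullback) (rule continuous_map_product_projection, simp)
  then show ?thesis by (simp add: comp_def)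
qed

lemma topspace_cfg[simp]: "topspace cfg_top = UNIV"
  by (simp add: cfg_top_def topspace_pullback_topology)

lemma image_cont:
  assumes left: "\<And>v. v \<in> S \<Longrightarrow> P' (P v) = v" and Th: "\<And>\<eta>. \<eta> \<in> Th \<Longrightarrow> \<eta> \<subseteq> S"
  shows "continuous_map (subtopology cfg_top Th) cfg_top (\<lambda>\<eta>. P ` \<eta>)"
proof -
  have "continuous_map (subtopology cfg_top Th) (pullback_topology UNIV (\<lambda>\<xi> w. w \<in> \<xi>) (product_topology (\<lambda>_. (euclidean :: bool topology)) UNIV)) (\<lambda>\<eta>. P ` \<eta>)"
proof (rule continuous_map_pullback')
  show "topspace (subtopology cfg_top Th) \<subseteq> (\<lambda>\<eta>. P ` \<eta>) -` UNIV" by simp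
  show "continuous_map (subtopology cfg_top Th) (product_topology (\<lambda>_. euclidean) UNIV)
      ((\<lambda>\<xi> w. w \<in> \<xi>) \<circ> (\<lambda>\<eta>. P ` \<eta>))"
    unfolding continuous_map_componentwise_UNIV
  proof
    fix w
    have eq: "(w \<in> P ` \<eta>) = (if w \<in> P ` S then P' w \<in> \<eta> else False)" if "\<eta> \<in> Th" for \<eta>
      using Th[OF that] left by (auto simp: image_iff)
    have "continuous_map (subtopology cfg_top Th) euclidean
            (if w \<in> P ` S then (\<lambda>\<eta>. P' w \<in> \<eta>) else (\<lambda>_. False))"
      by (auto intro: continuous_map_from_subtopology coord_cont)
    then show "continuous_map (subtopology cfg_top Th) euclidean (\<lambda>x. ((\<lambda>\<xi> w. w \<in> \<xi>) \<circ> (\<lambda>\<eta>. P ` \<eta>)) x w)"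
      by (rule continuous_map_eq) (simp add: eq)
  qed
qed
  then show ?thesis unfolding cfg_top_def[symmetric] .
qed

lemma set_cr: "set (cr s w) \<subseteq> insert s (set w)"
  by (cases w) auto

lemma set_foldr_cr: "set (foldr cr x y) \<subseteq> set x \<union> set y"
  by (induction x) (use set_cr in fastforce)+

lemma cancels_rl: "inj_on \<sigma> B \<Longrightarrow> fst x \<in> B \<Longrightarrow> fst y \<in> B \<Longrightarrow>
   cancels (apfst \<sigma> x) (apfst \<sigma> y) \<longleftrightarrow> cancels x y"
  by (auto simp: cancels_def apfst_def map_prod_def split: prod.splits dest: inj_onD)

lemma reduced_rl: "inj_on \<sigma> B \<Longrightarrow> set (map fst w) \<subseteq> B \<Longrightarrow> reduced (map (apfst \<sigma>) w) \<longleftrightarrow> reduced w"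
proof (induction w)
  case (Cons x w)
  then show ?case by (cases w) (auto simp: cancels_rl)
qed simp

lemma map_cr: "inj_on \<sigma> B \<Longrightarrow> fst s \<in> B \<Longrightarrow> set (map fst w) \<subseteq> B \<Longrightarrow>
   map (apfst \<sigma>) (cr s w) = cr (apfst \<sigma> s) (map (apfst \<sigma>) w)"
  by (cases w) (auto simp: cancels_rl)

lemma map_foldr_cr: "inj_on \<sigma> B \<Longrightarrow> set (map fst x) \<subseteq> B \<Longrightarrow> set (map fst y) \<subseteq> B \<Longrightarrow>
   map (apfst \<sigma>) (foldr cr x y) = foldr cr (map (apfst \<sigma>) x) (map (apfst \<sigma>) y)"
proof (induction x)
  case (Cons s x)
  have "set (foldr cr x y) \<subseteq> set x \<union> set y" by (rule set_foldr_cr)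
  then have "set (map fst (foldr cr x y)) \<subseteq> B" using Cons.prems by force
  then show ?case using Cons by (simp add: map_cr)
qed simp

lemma map_mulw: assumes "inj_on \<sigma> B" "x \<in> FG B" "y \<in> FG B"
  shows "map (apfst \<sigma>) (mulw x y) = mulw (map (apfst \<sigma>) x) (map (apfst \<sigma>) y)"
proof -
  have r: "reduced x" "reduced y" "set (map fst x) \<subseteq> B" "set (map fst y) \<subseteq> B"
    using assms by (auto simp: FG_def)
  then have r2: "reduced (map (apfst \<sigma>) x)" "reduced (map (apfst \<sigma>) y)"
    using reduced_rl[OF assms(1)] by auto
  show ?thesis using r r2 by (simp add: mulw_foldr map_foldr_cr[OF assms(1)])
qed

lemma map_invw: "map (apfst \<sigma>) (invw g) = invw (map (apfst \<sigma>) g)"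
  by (simp add: invw_alt rev_map flipl_def comp_def apfst_def map_prod_def split: prod.splits)

lemma FG_invw: "g \<in> FG B \<Longrightarrow> invw g \<in> FG B"
  by (auto simp: FG_def invw_alt flipl_def reduced_rev reduced_map_flip)

lemma relabel_conj:
  fixes \<sigma> :: "'s \<Rightarrow> 't"
  assumes inj: "inj_on \<sigma> B" and Th: "\<And>\<eta>. \<eta> \<in> Th \<Longrightarrow> \<eta> \<subseteq> FG B"
  shows "conjugate B Th (\<sigma> ` B) ((\<lambda>\<eta>. map (apfst \<sigma>) ` \<eta>) ` Th)"
proof -
  define P :: "'s word \<Rightarrow> 't word" where "P = map (apfst \<sigma>)"
  define \<sigma>' where "\<sigma>' = inv_into B \<sigma>"
  define P' :: "'t word \<Rightarrow> 's word" where "P' = map (apfst \<sigma>')"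
  have inj': "inj_on \<sigma>' (\<sigma> ` B)" by (simp add: \<sigma>'_def inj_on_inv_into)
  have PP: "P' (P w) = w" if "set (map fst w) \<subseteq> B" for w
    using that inj unfolding P_def P'_def \<sigma>'_def
    by (induction w) (auto simp: apfst_def map_prod_def inv_into_f_f split: prod.splits)
  have PP': "P (P' w) = w" if "set (map fst w) \<subseteq> \<sigma> ` B" for w
    using that unfolding P_def P'_def \<sigma>'_def
    by (induction w) (auto simp: apfst_def map_prod_def f_inv_into_f split: prod.splits)
  have PFG: "P w \<in> FG (\<sigma> ` B)" if "w \<in> FG B" for w
    using that reduced_rl[OF inj] by (auto simp: FG_def P_def)
  have P'FG: "P' w \<in> FG B" if "w \<in> FG (\<sigma> ` B)" for w
  proof -
    have "set (map fst (P' w)) \<subseteq> B" using that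
      by (auto simp: FG_def P'_def \<sigma>'_def inv_into_into)
    moreover have "reduced (P' w)" using that reduced_rl[OF inj', of w]
      by (auto simp: FG_def P'_def \<sigma>'_def)
    ultimately show ?thesis by (simp add: FG_def)
  qed
  have PFGl: "set (map fst w) \<subseteq> B" if "w \<in> FG B" for w using that by (simp add: FG_def)
  have bij: "bij_betw P (FG B) (FG (\<sigma> ` B))"
  proof (rule bij_betw_byWitness[where f'=P'])
    show "\<forall>a\<in>FG B. P' (P a) = a" using PP PFGl by blast
    show "\<forall>a'\<in>FG (\<sigma> ` B). P (P' a') = a'" using PP' by (auto simp: FG_def)
    show "P ` FG B \<subseteq> FG (\<sigma> ` B)" using PFG by blast
    show "P' ` FG (\<sigma> ` B) \<subseteq> FG B" using P'FG by blast
  qed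
  have injP: "inj_on P (FG B)" using bij bij_betw_def by blast
  have hom: "P (mulw x y) = mulw (P x) (P y)" if "x \<in> FG B" "y \<in> FG B" for x y
    using map_mulw[OF inj that] by (simp add: P_def)
  define Th' where "Th' = (\<lambda>\<eta>. P ` \<eta>) ` Th"
  have Th': "\<eta> \<subseteq> FG (\<sigma> ` B)" if "\<eta> \<in> Th'" for \<eta> using that Th PFG by (auto simp: Th'_def)
  have bkw: "P' ` P ` \<eta> = \<eta>" if "\<eta> \<in> Th" for \<eta>
    using Th[OF that] PP PFGl by (force simp: image_image)
  have homeo: "homeomorphic_map (subtopology cfg_top Th) (subtopology cfg_top Th') (\<lambda>\<eta>. P ` \<eta>)"
    unfolding homeomorphic_map_maps
  proof (intro exI[of _ "\<lambda>\<eta>. P' ` \<eta>"], unfold homeomorphic_maps_def, intro conjI)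
    show "continuous_map (subtopology cfg_top Th) (subtopology cfg_top Th') (\<lambda>\<eta>. P ` \<eta>)"
      by (rule continuous_map_into_subtopology[OF image_cont[of "FG B" P' P Th]])
         (use PP PFGl Th in \<open>auto simp: Th'_def\<close>)
    have l1: "\<And>v. v \<in> FG (\<sigma> ` B) \<Longrightarrow> P (P' v) = v" using PP' by (simp add: FG_def)
    have l2: "(\<lambda>\<eta>. P' ` \<eta>) \<in> topspace (subtopology cfg_top Th') \<rightarrow> Th"
      using bkw by (auto simp: Th'_def)
    show "continuous_map (subtopology cfg_top Th') (subtopology cfg_top Th) (\<lambda>\<eta>. P' ` \<eta>)"
      by (rule continuous_map_into_subtopology[OF image_cont[of "FG (\<sigma> ` B)" P P' Th', OF l1 Th'] l2])
    show "\<forall>x\<in>topspace (subtopology cfg_top Th). P' ` P ` x = x" using bkw by simp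
    show "\<forall>y\<in>topspace (subtopology cfg_top Th'). P ` P' ` y = y"
      using bkw by (auto simp: Th'_def)
  qed
  have dom: "(\<lambda>\<eta>. P ` \<eta>) ` {\<xi> \<in> Th. invw g \<in> \<xi>} = {\<eta> \<in> Th'. invw (P g) \<in> \<eta>}" if g: "g \<in> FG B" for g
  proof -
    have ig: "invw g \<in> FG B" using FG_invw[OF g] .
    have Pi: "P (invw g) = invw (P g)" by (simp add: P_def map_invw)
    have "invw g \<in> \<xi> \<longleftrightarrow> invw (P g) \<in> P ` \<xi>" if "\<xi> \<in> Th" for \<xi>
      using Th[OF that] ig injP Pi[symmetric] by (auto simp: inj_on_image_mem_iff)
    then show ?thesis by (auto simp: Th'_def)
  qed
  have actc: "P ` act g \<xi> = act (P g) (P ` \<xi>)" if g: "g \<in> FG B" and x: "\<xi> \<in> Th" for g \<xi>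
  proof -
    have "P (mulw \<gamma> (invw g)) = mulw (P \<gamma>) (invw (P g))" if "\<gamma> \<in> \<xi>" for \<gamma>
      using hom[of \<gamma> "invw g"] Th[OF x] that FG_invw[OF g] by (auto simp: P_def map_invw)
    then show ?thesis by (auto simp: act_def image_image cong: image_cong)
  qed
  show ?thesis unfolding conjugate_def
    by (rule exI[of _ "\<lambda>\<eta>. P ` \<eta>"], rule exI[of _ P])
       (use bij hom homeo dom actc in \<open>auto simp: P_def[symmetric] Th'_def\<close>)
qed


context subs
begin

lemma valid_conf: assumes x: "\<xi> \<in> Om" and a: "\<alpha> \<in> \<xi>" and i: "i < length \<alpha>"
  shows "(if snd (\<alpha>!i) then act (drop (Suc i) \<alpha>) \<xi> else act (drop i \<alpha>) \<xi>) \<in> Om \<and>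
         [(fst (\<alpha>!i), True)] \<in> (if snd (\<alpha>!i) then act (drop (Suc i) \<alpha>) \<xi> else act (drop i \<alpha>) \<xi>)"
proof -
  define \<zeta>1 where "\<zeta>1 = act (drop (Suc i) \<alpha>) \<xi>"
  have z1: "\<zeta>1 \<in> Om" using inv[OF x drop_Om[OF x a]] by (simp add: \<zeta>1_def)
  have d: "\<alpha>!i # drop (Suc i) \<alpha> \<in> \<xi>" using drop_Om[OF x a, of i] i by (simp add: Cons_nth_drop_Suc)
  have s1: "[\<alpha>!i] \<in> \<zeta>1" using single_in[OF x d] by (simp add: \<zeta>1_def)
  obtain b e where be: "\<alpha>!i = (b,e)" by fastforce
  show ?thesis
  proof (cases e)
    case True then show ?thesis using z1 s1 be by (simp add: \<zeta>1_def)
  next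
    case False
    have "act (drop i \<alpha>) \<xi> = act [\<alpha>!i] \<zeta>1" using zeta_step[OF x a i] by (simp add: \<zeta>1_def)
    moreover have "[flipl (\<alpha>!i)] \<in> act [\<alpha>!i] \<zeta>1" by (rule flip_in[OF z1 s1])
    moreover have "act [\<alpha>!i] \<zeta>1 \<in> Om" by (rule act_pos[OF z1 s1])
    ultimately show ?thesis using be False by (simp add: flipl_def)
  qed
qed

lemma codew_letters: assumes x: "\<xi> \<in> Om" and a: "\<alpha> \<in> \<xi>"
  shows "\<forall>l \<in> set (codew F \<xi> \<alpha>). \<exists>\<zeta> b. \<zeta> \<in> Om \<and> [(b,True)] \<in> \<zeta> \<and> l = (F \<zeta> b, snd l)"
proof
  fix l assume "l \<in> set (codew F \<xi> \<alpha>)"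
  then obtain i where i: "i < length \<alpha>" "l = codew F \<xi> \<alpha> ! i" by (auto simp: in_set_conv_nth)
  show "\<exists>\<zeta> b. \<zeta> \<in> Om \<and> [(b,True)] \<in> \<zeta> \<and> l = (F \<zeta> b, snd l)"
  proof -
    define \<zeta> where "\<zeta> = (if snd (\<alpha>!i) then act (drop (Suc i) \<alpha>) \<xi> else act (drop i \<alpha>) \<xi>)"
    have v: "\<zeta> \<in> Om" "[(fst (\<alpha>!i),True)] \<in> \<zeta>" using valid_conf[OF x a i(1)] unfolding \<zeta>_def by auto
    have "l = (F \<zeta> (fst (\<alpha>!i)), snd l)" using i by (simp add: nth_codew \<zeta>_def)
    then show ?thesis using v by blast
  qed
qed

lemma codew_relabel: assumes x: "\<xi> \<in> Om" and a: "\<alpha> \<in> \<xi>"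
  and h: "\<And>\<zeta> b. \<zeta> \<in> Om \<Longrightarrow> [(b,True)] \<in> \<zeta> \<Longrightarrow> G \<zeta> b = \<sigma> (F \<zeta> b)"
  shows "codew G \<xi> \<alpha> = map (apfst \<sigma>) (codew F \<xi> \<alpha>)"
proof (rule nth_equalityI)
  fix i assume "i < length (codew G \<xi> \<alpha>)"
  then have i: "i < length \<alpha>" by simp
  show "codew G \<xi> \<alpha> ! i = map (apfst \<sigma>) (codew F \<xi> \<alpha>) ! i"
    using valid_conf[OF x a i] h i by (simp add: nth_codew)
qed simp

lemma TF: assumes z: "\<zeta> \<in> Om" "\<zeta>' \<in> Om" and a: "[(a,True)] \<in> \<zeta>" "[(a',True)] \<in> \<zeta>'"
  shows "Tn n \<zeta> a = Tn n \<zeta>' a' \<longleftrightarrow> Fk n \<zeta> a = Fk n \<zeta>' a'"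
proof -
  have za: "act [(a,True)] \<zeta> \<in> Om" "act [(a',True)] \<zeta>' \<in> Om" using act_pos z a by auto
  have "Tn n \<zeta> a = Tn n \<zeta>' a' \<longleftrightarrow>
     sball n (act [(a,True)] \<zeta>) = sball n (act [(a',True)] \<zeta>') \<and> a = a' \<and> sball n \<zeta> = sball n \<zeta>'"
    unfolding Tn_def ball_sball sym.inject
    using Abs_fset_eq[OF fin_sball[OF za(1)] fin_sball[OF za(2)]] Abs_fset_eq[OF fin_sball[OF z(1)] fin_sball[OF z(2)]]
    by simp
  then show ?thesis using DpropD[OF Dprop_all z a] by auto
qed

theorem main: assumes n: "n \<ge> 1"
  shows "conjugate (ball_alph n A Om) (ball_shift n Om)
            (fst ((ball1_step ^^ n) (A, Om))) (snd ((ball1_step ^^ n) (A, Om)))"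
proof -
  define V where "V = {p. fst p \<in> Om \<and> [(snd p, True)] \<in> fst p}"
  define B where "B = ball_alph n A Om"
  have BV: "B = (\<lambda>p. Tn n (fst p) (snd p)) ` V"
  proof (rule set_eqI, rule iffI)
    fix x assume "x \<in> B"
    then obtain \<xi> a where "\<xi> \<in> Om" "[(a,True)] \<in> \<xi>" "x = Tn n \<xi> a"
      unfolding B_def ball_alph_def Tn_def by auto
    then show "x \<in> (\<lambda>p. Tn n (fst p) (snd p)) ` V" unfolding V_def
      by (intro image_eqI[of _ _ "(\<xi>, a)"]) auto
  next
    fix x assume "x \<in> (\<lambda>p. Tn n (fst p) (snd p)) ` V"
    then obtain \<xi> a where h: "\<xi> \<in> Om" "[(a,True)] \<in> \<xi>" "x = Tn n \<xi> a" unfolding V_def by auto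
    have "a \<in> A" using FG_Om[OF h(1)] h(2) by (auto simp: FG_def)
    then show "x \<in> B" unfolding B_def ball_alph_def Tn_def using h by (auto simp: Tn_def)
  qed
  define \<sigma> where "\<sigma> x = (let p = SOME p. p \<in> V \<and> x = Tn n (fst p) (snd p) in Fk n (fst p) (snd p))" for x
  have \<sigma>T: "\<sigma> (Tn n \<zeta> a) = Fk n \<zeta> a" if z: "\<zeta> \<in> Om" "[(a,True)] \<in> \<zeta>" for \<zeta> a
  proof -
    define p where "p = (SOME p. p \<in> V \<and> Tn n \<zeta> a = Tn n (fst p) (snd p))"
    have "(\<zeta>,a) \<in> V \<and> Tn n \<zeta> a = Tn n (fst (\<zeta>,a)) (snd (\<zeta>,a))" using z by (simp add: V_def)
    then have p: "p \<in> V \<and> Tn n \<zeta> a = Tn n (fst p) (snd p)" unfolding p_def by (rule someI)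
    then have pv: "fst p \<in> Om" "[(snd p, True)] \<in> fst p" by (simp_all add: V_def)
    have e: "Fk n (fst p) (snd p) = Fk n \<zeta> a"
    proof -
      have "Tn n (fst p) (snd p) = Tn n \<zeta> a" using p by simp
      then show ?thesis using TF[where n=n, OF pv(1) z(1) pv(2) z(2)] by blast
    qed
    have "\<sigma> (Tn n \<zeta> a) = Fk n (fst p) (snd p)" by (simp only: \<sigma>_def Let_def p_def)
    then show ?thesis using e by simp
  qed
  have inj: "inj_on \<sigma> B"
  proof (rule inj_onI)
    fix x y assume "x \<in> B" "y \<in> B" "\<sigma> x = \<sigma> y"
    then obtain p q where pq: "p \<in> V" "q \<in> V" "x = Tn n (fst p) (snd p)" "y = Tn n (fst q) (snd q)"
      "\<sigma> x = \<sigma> y" unfolding BV by auto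
    have p: "fst p \<in> Om" "[(snd p, True)] \<in> fst p" and q: "fst q \<in> Om" "[(snd q, True)] \<in> fst q"
      using pq by (auto simp: V_def)
    have "Fk n (fst p) (snd p) = Fk n (fst q) (snd q)"
      using pq(3-5) \<sigma>T[OF p] \<sigma>T[OF q] by simp
    then show "x = y" using TF[OF p(1) q(1) p(2) q(2)] pq(3,4) by simp
  qed
  have sB: "\<sigma> ` B = {Fk n \<zeta> a | \<zeta> a. \<zeta> \<in> Om \<and> [(a,True)] \<in> \<zeta>}"
  proof (rule set_eqI, rule iffI)
    fix y assume "y \<in> \<sigma> ` B"
    then obtain p where p: "p \<in> V" "y = \<sigma> (Tn n (fst p) (snd p))" unfolding BV by auto
    then have pv: "fst p \<in> Om" "[(snd p, True)] \<in> fst p" by (simp_all add: V_def)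
    have "y = Fk n (fst p) (snd p)" using p(2) \<sigma>T[OF pv] by simp
    then show "y \<in> {Fk n \<zeta> a | \<zeta> a. \<zeta> \<in> Om \<and> [(a,True)] \<in> \<zeta>}" using pv by blast
  next
    fix y assume "y \<in> {Fk n \<zeta> a | \<zeta> a. \<zeta> \<in> Om \<and> [(a,True)] \<in> \<zeta>}"
    then obtain \<zeta> a where z: "\<zeta> \<in> Om" "[(a,True)] \<in> \<zeta>" "y = Fk n \<zeta> a" by auto
    have "Tn n \<zeta> a \<in> B" unfolding BV V_def by (rule image_eqI[of _ _ "(\<zeta>,a)"]) (use z in auto)
    moreover have "y = \<sigma> (Tn n \<zeta> a)" using \<sigma>T[OF z(1,2)] z(3) by simp
    ultimately show "y \<in> \<sigma> ` B" by blast
  qed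
  have gT: "\<And>\<zeta> a. middle (Tn n \<zeta> a) = a" by (rule middle_Tn)
  have Th: "\<eta> \<subseteq> FG B" if th: "\<eta> \<in> code (Tn n) ` Om" for \<eta>
  proof
    fix w assume w: "w \<in> \<eta>"
    obtain \<xi> where x1: "\<xi> \<in> Om" "\<eta> = code (Tn n) \<xi>" using th by blast
    obtain \<alpha> where x2: "\<alpha> \<in> \<xi>" "w = codew (Tn n) \<xi> \<alpha>" using w x1(2) unfolding code_def by blast
    have r: "reduced w" using reduced_codew[of middle "Tn n", OF gT red_mem[OF x1(1) x2(1)]] x2(2) by simp
    have "set (map fst w) \<subseteq> B"
    proof
      fix c assume "c \<in> set (map fst w)"
      then obtain l where l: "l \<in> set w" "c = fst l" by auto
      have "\<exists>\<zeta> b. \<zeta> \<in> Om \<and> [(b,True)] \<in> \<zeta> \<and> l = (Tn n \<zeta> b, snd l)"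
        using codew_letters[OF x1(1) x2(1), of "Tn n"] x2(2) l(1) by simp
      then obtain \<zeta> b where zb: "\<zeta> \<in> Om" "[(b,True)] \<in> \<zeta>" "l = (Tn n \<zeta> b, snd l)" by blast
      have cz: "c = Tn n \<zeta> b" using zb(3) l(2) by (metis fst_conv)
      show "c \<in> B" unfolding BV V_def by (rule image_eqI[of _ _ "(\<zeta>, b)"]) (use zb cz in auto)
    qed
    then show "w \<in> FG B" using r by (simp add: FG_def)
  qed
  have codeF: "code (Fk n) \<xi> = map (apfst \<sigma>) ` code (Tn n) \<xi>" if x: "\<xi> \<in> Om" for \<xi>
  proof -
    have "codew (Fk n) \<xi> \<alpha> = map (apfst \<sigma>) (codew (Tn n) \<xi> \<alpha>)" if "\<alpha> \<in> \<xi>" for \<alpha>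
      by (rule codew_relabel[OF x that]) (simp add: \<sigma>T)
    then show ?thesis unfolding code_def image_image by (rule image_cong[OF refl])
  qed
  have it: "(ball1_step ^^ n) (A, Om) = (\<sigma> ` B, (\<lambda>\<eta>. map (apfst \<sigma>) ` \<eta>) ` code (Tn n) ` Om)"
  proof -
    have "code (Fk n) ` Om = (\<lambda>\<eta>. map (apfst \<sigma>) ` \<eta>) ` code (Tn n) ` Om"
      unfolding image_image by (rule image_cong[OF refl]) (rule codeF)
    then show ?thesis using iter[of n] n sB by simp
  qed
  have bs: "ball_shift n Om = code (Tn n) ` Om"
    by (simp add: ball_shift_def phi_code cong: image_cong)
  show ?thesis unfolding it bs B_def[symmetric] fst_conv snd_conv
    by (rule relabel_conj[OF inj Th])
qed

end


theorem proposition3: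
  fixes A :: "'a sym set" and \<Omega> :: "'a sym word set set" and n :: nat
  assumes "finite A"
    and "convex_subshift A \<Omega>"
    and "n \<ge> 1"
  shows "conjugate (ball_alph n A \<Omega>) (ball_shift n \<Omega>)
                   (fst ((ball1_step ^^ n) (A, \<Omega>))) (snd ((ball1_step ^^ n) (A, \<Omega>)))"
proof -
  interpret subs A \<Omega>
    using assms(1,2) by unfold_locales (auto simp: convex_subshift_def)
  show ?thesis by (rule main[OF assms(3)])
qed

end
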